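(* Let $\mathbb{S}=[S_m,S_M]$ with $S_m<S_M$, and let $h$ be a continuously differentiable, monotonically non-decreasing link function (defined on an open interval containing all points at which it is evaluated below) whose range over $\mathbb{S}$ is the compact interval $[h(S_m),h(S_M)]$, with $h(S_M)>h(S_m)$. Fix $w_u$ in the interior of $\mathbb{S}$, a bias $d\in\mathbb{R}$ and a width $\tau>0$, let $\mathbb{S}_u=[w_u-\tau/2,\,w_u+\tau/2]\subset\mathbb{S}$, and let the observed score be $z(w)=w+I_u(w)\,d$, where $I_u(w)=1$ if $w\in\mathbb{S}_u$ and $I_u(w)=0$ otherwise, with $w$ uniformly distributed on $\mathbb{S}$. Suppose the model predicts $\hat z=w+\hat\delta$, where the constant offset $\hat\delta=\hat\delta(\tau,d)$ is optimal for the expected matching loss, i.e. it satisfies $$\int_{S_m}^{S_M}\big[h(w+\hat\delta)-h(z(w))\big]\,dw=0 .$$ Define $\Delta_{\mathrm{BUST}}(w_u)=\lim_{\tau\to0}\frac{1}{\tau}(\hat z-w)=\lim_{\tau\to 0}\hat\delta/\tau$ and $\Delta_{\mathrm{BLUST}}(w_u)=\lim_{\tau\to0,\,d\to0}\frac{1}{d\tau}(\hat z-w)$. Then $$\Delta_{\mathrm{BUST}}(w_u)=\frac{h(w_u+d)-h(w_u)}{h(S_M)-h(S_m)},\qquad \Delta_{\mathrm{BLUST}}(w_u)=\frac{h'(w_u)}{h(S_M)-h(S_m)}.$$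
   Context: A link function $h$ with primitive $H$ (so $H'=h$) defines the scalar matching loss $\mathcal{L}_m(\hat s,s)=H(\hat s)-H(s)-(\hat s-s)h(s)=\int_s^{\hat s}[h(z)-h(s)]\,dz$, whose gradient in $\hat s$ is $h(\hat s)-h(s)$. Links are taken monotonically non-decreasing, so the loss is convex in $\hat s$. In the bias-underspecification model, the model has no feature distinguishing $\mathbb{S}_u$ from the rest of $\mathbb{S}$, so it can only predict the collective score shifted by a single constant offset $\hat\delta$, chosen so that the expected gradient of the matching loss (over $w\sim U(\mathbb{S})$) vanishes. *)

theory Defs
  imports "HOL-Analysis.Analysis"
begin

definition I_u :: "real \<Rightarrow> real \<Rightarrow> real \<Rightarrow> real" where
  "I_u wu \<tau> w = (if w \<in> {wu - \<tau>/2 .. wu + \<tau>/2} then 1 else 0)"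

definition obs_score :: "real \<Rightarrow> real \<Rightarrow> real \<Rightarrow> real \<Rightarrow> real" where
  "obs_score wu \<tau> d w = w + I_u wu \<tau> w * d"

text \<open>Optimality (vanishing expected gradient of the matching loss) of the offset \<delta>,
  with all evaluation points of h inside the domain I.\<close>
definition optimal_offset ::
  "real set \<Rightarrow> (real \<Rightarrow> real) \<Rightarrow> real \<Rightarrow> real \<Rightarrow> real \<Rightarrow> real \<Rightarrow> real \<Rightarrow> real \<Rightarrow> bool" where
  "optimal_offset I h Sm SM wu \<tau> d \<delta> \<longleftrightarrow>
     {Sm + \<delta> .. SM + \<delta>} \<subseteq> I \<and>
     integral {Sm..SM} (\<lambda>w. h (w + \<delta>) - h (obs_score wu \<tau> d w)) = 0"

end

theory Submission
  imports Defs
begin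

lemma int_approx:
  fixes g :: "real \<Rightarrow> real"
  assumes "u \<le> v" "continuous_on {u..v} g" "\<And>w. w \<in> {u..v} \<Longrightarrow> \<bar>g w - K\<bar> \<le> B"
  shows "\<bar>integral {u..v} g - (v-u)*K\<bar> \<le> B*(v-u)"
proof -
  have c: "continuous_on {u..v} (\<lambda>w. g w - K)" using assms(2) by (intro continuous_intros)
  have "norm (integral {u..v} (\<lambda>w. g w - K)) \<le> B*(v-u)"
    by (rule integral_bound[OF assms(1) c]) (use assms(3) in auto)
  moreover have "integral {u..v} (\<lambda>w. g w - K) = integral {u..v} g - (v-u)*K"
    using integral_diff[OF integrable_continuous_interval[OF assms(2)] integrable_const_ivl[of K u v]] assms(1)
    by simp
  ultimately show ?thesis by simp
qed

lemma generic:
  fixes R D s :: "'a \<Rightarrow> real" and q :: "real \<Rightarrow> real"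
  assumes ev: "eventually P F"
    and rel: "\<And>x. P x \<Longrightarrow> \<bar>R x\<bar> < m \<Longrightarrow> R x = D x * q (D x) \<and> \<bar>D x\<bar> \<le> K * \<bar>R x\<bar>"
    and m: "m > 0"
    and RL: "((\<lambda>x. R x / s x) \<longlongrightarrow> L) F" and s0: "(s \<longlongrightarrow> 0) F"
    and sne: "eventually (\<lambda>x. s x \<noteq> 0) F"
    and qc: "isCont q 0" and q0: "q 0 \<noteq> 0"
  shows "((\<lambda>x. D x / s x) \<longlongrightarrow> L / q 0) F"
proof -
  have "((\<lambda>x. R x / s x * s x) \<longlongrightarrow> L * 0) F" by (intro tendsto_mult RL s0)
  then have "((\<lambda>x. R x / s x * s x) \<longlongrightarrow> 0) F" by simp
  moreover have "eventually (\<lambda>x. R x / s x * s x = R x) F" using sne by eventually_elim simp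
  ultimately have R0: "(R \<longlongrightarrow> 0) F" by (rule Lim_transform_eventually)
  have "((\<lambda>x. \<bar>R x\<bar>) \<longlongrightarrow> 0) F" by (rule tendsto_rabs_zero[OF R0])
  from order_tendstoD(2)[OF this m] have "eventually (\<lambda>x. \<bar>R x\<bar> < m) F" .
  with ev have evr: "eventually (\<lambda>x. R x = D x * q (D x) \<and> \<bar>D x\<bar> \<le> K * \<bar>R x\<bar>) F"
    by eventually_elim (use rel in auto)
  have "((\<lambda>x. K * \<bar>R x\<bar>) \<longlongrightarrow> K * 0) F" by (rule tendsto_mult[OF tendsto_const tendsto_rabs_zero[OF R0]])
  then have "((\<lambda>x. K * \<bar>R x\<bar>) \<longlongrightarrow> 0) F" by simp
  then have D0: "(D \<longlongrightarrow> 0) F"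
    apply (rule Lim_null_comparison[rotated])
    using evr by eventually_elim auto
  have qD: "((\<lambda>x. q (D x)) \<longlongrightarrow> q 0) F" by (rule isCont_tendsto_compose[OF qc D0])
  have "((\<lambda>x. (R x / s x) / q (D x)) \<longlongrightarrow> L / q 0) F" by (intro tendsto_divide RL qD q0)
  moreover have "eventually (\<lambda>x. q (D x) \<noteq> 0) F" by (rule tendsto_imp_eventually_ne[OF qD q0])
  then have "eventually (\<lambda>x. (R x / s x) / q (D x) = D x / s x) F"
    using evr by eventually_elim auto
  ultimately show ?thesis by (rule Lim_transform_eventually)
qed

lemma mvt_h:
  fixes h h' :: "real \<Rightarrow> real"
  assumes hd: "\<And>x. x \<in> I \<Longrightarrow> (h has_real_derivative h' x) (at x)" and iI: "is_interval I"
    and xI: "x \<in> I" and yI: "y \<in> I"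
  shows "\<exists>\<xi>. \<bar>\<xi> - x\<bar> \<le> \<bar>y - x\<bar> \<and> h y - h x = (y - x) * h' \<xi>"
proof -
  have isI: "\<And>z. min x y \<le> z \<Longrightarrow> z \<le> max x y \<Longrightarrow> z \<in> I"
    using iI xI yI unfolding is_interval_1
    by (metis max.commute max_def min.commute min_def)
  consider "x < y" | "y < x" | "x = y" by linarith
  then show ?thesis
  proof cases
    case 1
    obtain z where "x < z" "z < y" "h y - h x = (y - x) * h' z"
      using MVT2[OF 1, of h h'] hd isI 1 by force
    then show ?thesis by (intro exI[of _ z]) auto
  next
    case 2
    obtain z where "y < z" "z < x" "h x - h y = (x - y) * h' z"
      using MVT2[OF 2, of h h'] hd isI 2 by force
    then show ?thesis by (intro exI[of _ z]) (auto simp: algebra_simps)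
  next
    case 3
    then show ?thesis by auto
  qed
qed

theorem theorem1:
  fixes h h' :: "real \<Rightarrow> real" and I :: "real set"
    and Sm SM wu :: real and \<delta> :: "real \<Rightarrow> real \<Rightarrow> real"
  assumes "Sm < SM"
    and "open I" and "is_interval I" and "{Sm..SM} \<subseteq> I"
    and "\<And>x. x \<in> I \<Longrightarrow> (h has_real_derivative h' x) (at x)"
    and "continuous_on I h'"
    and "mono_on I h"
    and "h ` {Sm..SM} = {h Sm..h SM}"
    and "h SM > h Sm"
    and "Sm < wu" and "wu < SM"
    and \<delta>_opt: "\<And>\<tau> d. \<tau> > 0 \<Longrightarrow> Sm \<le> wu - \<tau>/2 \<Longrightarrow> wu + \<tau>/2 \<le> SM \<Longrightarrow>
              {wu - \<tau>/2 + d .. wu + \<tau>/2 + d} \<subseteq> I \<Longrightarrow>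
              (\<exists>e. optimal_offset I h Sm SM wu \<tau> d e) \<Longrightarrow>
              optimal_offset I h Sm SM wu \<tau> d (\<delta> \<tau> d)"
  shows "(\<forall>d. wu + d \<in> I \<longrightarrow>
            ((\<lambda>\<tau>. \<delta> \<tau> d / \<tau>) \<longlongrightarrow> (h (wu + d) - h wu) / (h SM - h Sm)) (at_right 0))
       \<and> ((\<lambda>p. \<delta> (fst p) (snd p) / (snd p * fst p)) \<longlongrightarrow> h' wu / (h SM - h Sm))
            (at (0, 0) within {p. fst p > 0 \<and> snd p \<noteq> 0})"
proof -
  note hd = assms(5)
  have hcat: "\<And>x. x \<in> I \<Longrightarrow> isCont h x" by (rule DERIV_isCont[OF hd])
  have hcont: "continuous_on I h" by (intro continuous_at_imp_continuous_on ballI hcat)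
  define c where "c = h SM - h Sm"
  have c: "c > 0" using assms(9) c_def by simp
  have isI: "\<And>x y z. x \<in> I \<Longrightarrow> y \<in> I \<Longrightarrow> x \<le> z \<Longrightarrow> z \<le> y \<Longrightarrow> z \<in> I"
    using assms(3) unfolding is_interval_1 by blast
  have inball: "\<And>x y e. \<bar>x - y\<bar> < e \<Longrightarrow> x \<in> ball y e"
    by (auto simp: dist_real_def abs_minus_commute)
  have SmI: "Sm \<in> I" and SMI: "SM \<in> I" and wuI: "wu \<in> I"
    using assms(1,10,11) subsetD[OF assms(4)] by simp_all
  obtain e1 where e1: "e1 > 0" "ball Sm e1 \<subseteq> I" using open_contains_ball_eq[OF assms(2)] SmI by auto
  obtain e2 where e2: "e2 > 0" "ball SM e2 \<subseteq> I" using open_contains_ball_eq[OF assms(2)] SMI by auto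
  obtain \<rho>0 where \<rho>0: "\<rho>0 > 0" "ball wu \<rho>0 \<subseteq> I" using open_contains_ball_eq[OF assms(2)] wuI by auto
  define r where "r = min e1 e2 / 2"
  have r: "r > 0" using e1 e2 r_def by simp
  have "Sm - r \<in> I" using e1 e2 r r_def by (intro subsetD[OF e1(2)] inball) auto
  moreover have "SM + r \<in> I" using e1 e2 r r_def by (intro subsetD[OF e2(2)] inball) auto
  ultimately have rI: "{Sm - r..SM + r} \<subseteq> I"
  proof (intro subsetI)
    fix x assume "Sm - r \<in> I" "SM + r \<in> I" "x \<in> {Sm - r..SM + r}"
    then show "x \<in> I" using isI[of "Sm - r" "SM + r" x] by simp
  qed
  define a where "a = Sm - r"
  define b where "b = SM + r"
  define G where "G x = integral {a..x} h" for x
  have Gd: "(G has_real_derivative h x) (at x)" if "a < x" "x < b" for x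
  proof -
    have "continuous_on {a..b} h" using continuous_on_subset[OF hcont] rI unfolding a_def b_def by blast
    then have "(G has_real_derivative h x) (at x within {a..b})"
      unfolding G_def using that by (intro integral_has_real_derivative) auto
    then show ?thesis using at_within_Icc_at[OF that] by simp
  qed
  define Fg where "Fg \<delta>' = G (\<delta>' + SM) - G (\<delta>' + Sm)" for \<delta>'
  have Fgd: "(Fg has_real_derivative (h (\<delta>' + SM) - h (\<delta>' + Sm))) (at \<delta>')" if "\<bar>\<delta>'\<bar> < r" for \<delta>'
  proof -
    have "(G has_real_derivative h (\<delta>' + SM)) (at (\<delta>' + SM))"
      using that assms(1) a_def b_def by (intro Gd) auto
    then have 1: "((\<lambda>x. G (x + SM)) has_real_derivative h (\<delta>' + SM)) (at \<delta>')" by (simp add: DERIV_shift)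
    have "(G has_real_derivative h (\<delta>' + Sm)) (at (\<delta>' + Sm))"
      using that assms(1) a_def b_def by (intro Gd) auto
    then have 2: "((\<lambda>x. G (x + Sm)) has_real_derivative h (\<delta>' + Sm)) (at \<delta>')" by (simp add: DERIV_shift)
    show ?thesis unfolding Fg_def by (intro DERIV_diff 1 2)
  qed
  have Fint: "((\<lambda>w. h (w + \<delta>')) has_integral Fg \<delta>') {Sm..SM}" if "\<bar>\<delta>'\<bar> < r" for \<delta>'
  proof -
    have "((\<lambda>w. G (w + \<delta>')) has_vector_derivative h (w + \<delta>')) (at w within {Sm..SM})"
      if "w \<in> {Sm..SM}" for w
    proof -
      have "(G has_real_derivative h (w + \<delta>')) (at (w + \<delta>'))"
        using that \<open>\<bar>\<delta>'\<bar> < r\<close> a_def b_def by (intro Gd) auto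
      then have "((\<lambda>w. G (w + \<delta>')) has_real_derivative h (w + \<delta>')) (at w)" by (simp add: DERIV_shift)
      then show ?thesis
        by (simp add: has_real_derivative_iff_has_vector_derivative has_vector_derivative_at_within)
    qed
    from fundamental_theorem_of_calculus[OF less_imp_le[OF assms(1)] this]
    show ?thesis unfolding Fg_def by (simp add: add.commute)
  qed
  define D where "D \<delta>' = h (\<delta>' + SM) - h (\<delta>' + Sm)" for \<delta>'
  have A: "isCont (\<lambda>x. h (x + SM)) 0" using isCont_o2[where f="\<lambda>x. x + SM" and a=0 and g=h] hcat[OF SMI] by simp
  have B: "isCont (\<lambda>x. h (x + Sm)) 0" using isCont_o2[where f="\<lambda>x. x + Sm" and a=0 and g=h] hcat[OF SmI] by simp
  have "isCont D 0" unfolding D_def using A B by (rule isCont_diff)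
  then have "\<forall>e>0. \<exists>d>0. \<forall>y. dist y 0 < d \<longrightarrow> dist (D y) (D 0) < e"
    unfolding continuous_at_eps_delta .
  from this[rule_format, of "c/2"] c obtain \<eta>0 where
    \<eta>0: "\<eta>0 > 0" "\<And>y. dist y 0 < \<eta>0 \<Longrightarrow> dist (D y) (D 0) < c/2"
    by auto
  define \<eta> where "\<eta> = min \<eta>0 r / 2"
  have \<eta>: "\<eta> > 0" "\<eta> < r" using \<eta>_def \<eta>0 r by auto
  have Fgd': "DERIV Fg x :> D x" if "\<bar>x\<bar> < r" for x using Fgd[OF that] unfolding D_def .
  have D0: "D 0 = c" unfolding D_def c_def by simp
  have Dpos: "D y \<ge> c/2" if "\<bar>y\<bar> \<le> \<eta>" for y
  proof -
    have "\<bar>D y - D 0\<bar> < c/2" using \<eta>0(1) \<eta>0(2)[of y] that \<eta>_def by (auto simp: dist_real_def)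
    then show ?thesis using D0 by linarith
  qed
  have lowpos: "Fg y - Fg 0 \<ge> c/2 * y" if "0 \<le> y" "y \<le> \<eta>" for y
  proof (cases "y = 0")
    case False
    then have "0 < y" using that by simp
    have "\<And>x. 0 \<le> x \<Longrightarrow> x \<le> y \<Longrightarrow> DERIV Fg x :> D x" using that \<eta> by (intro Fgd') auto
    from MVT2[OF \<open>0 < y\<close> this] obtain z where z: "0 < z" "z < y" "Fg y - Fg 0 = (y - 0) * D z"
      by blast
    have "D z \<ge> c/2" using z that by (intro Dpos) auto
    then show ?thesis using z \<open>0 < y\<close> by (simp add: mult_left_mono mult.commute)
  qed simp
  have lowneg: "Fg 0 - Fg y \<ge> c/2 * (- y)" if "y \<le> 0" "- \<eta> \<le> y" for y
  proof (cases "y = 0")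
    case False
    then have "y < 0" using that by simp
    have "\<And>x. y \<le> x \<Longrightarrow> x \<le> 0 \<Longrightarrow> DERIV Fg x :> D x" using that \<eta> by (intro Fgd') auto
    from MVT2[OF \<open>y < 0\<close> this] obtain z where z: "y < z" "z < 0" "Fg 0 - Fg y = (0 - y) * D z"
      by blast
    have "D z \<ge> c/2" using z that by (intro Dpos) auto
    then show ?thesis using z \<open>y < 0\<close> by (simp add: mult_left_mono mult.commute)
  qed simp
  have Fgc: "continuous_on {-\<eta>..\<eta>} Fg"
    by (intro continuous_at_imp_continuous_on ballI DERIV_isCont[OF Fgd']) (use \<eta> in auto)
  define q where "q y = (if y = 0 then c else (Fg y - Fg 0) / y)" for y
  have qc: "isCont q 0"
  proof -
    have "(Fg has_real_derivative c) (at 0)" using Fgd[of 0] r D0 unfolding D_def by simp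
    then have "((\<lambda>y. (Fg y - Fg 0) / (y - 0)) \<longlongrightarrow> c) (at 0)" using has_field_derivative_iff by blast
    then have "(q \<longlongrightarrow> c) (at 0)"
      by (rule tendsto_cong[THEN iffD1, rotated]) (auto simp: q_def eventually_at_filter)
    then show ?thesis unfolding isCont_def q_def by simp
  qed
  define Rr where "Rr \<tau> d = integral {wu - \<tau>/2..wu + \<tau>/2} (\<lambda>w. h (w + d) - h w)" for \<tau> d
  define valid where "valid \<tau> d \<longleftrightarrow> \<tau> > 0 \<and> Sm \<le> wu - \<tau>/2 \<and> wu + \<tau>/2 \<le> SM \<and>
     {wu - \<tau>/2 + d .. wu + \<tau>/2 + d} \<subseteq> I" for \<tau> d
  have shiftI: "w + s \<in> I" if "{Sm + s..SM + s} \<subseteq> I" "w \<in> {Sm..SM}" for w s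
    using subsetD[OF that(1), of "w + s"] that(2) by auto
  have shiftC: "continuous_on {Sm..SM} (\<lambda>w. h (w + s))" if "{Sm + s..SM + s} \<subseteq> I" for s
  proof (rule continuous_on_compose2[OF hcont])
    show "continuous_on {Sm..SM} (\<lambda>w. w + s)" by (intro continuous_intros)
    show "(\<lambda>w. w + s) ` {Sm..SM} \<subseteq> I" using shiftI[OF that] by blast
  qed
  have vI: "w + d \<in> I \<and> w \<in> I" if V: "valid \<tau> d" and w: "w \<in> {wu - \<tau>/2..wu + \<tau>/2}" for \<tau> d w
  proof -
    have "w + d \<in> {wu - \<tau>/2 + d..wu + \<tau>/2 + d}" using w by simp
    moreover have "w \<in> {Sm..SM}" using w V unfolding valid_def by simp
    ultimately show ?thesis using V assms(4) unfolding valid_def by blast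
  qed
  have gcont: "continuous_on {wu - \<tau>/2..wu + \<tau>/2} (\<lambda>w. h (w + d) - h w)" if V: "valid \<tau> d" for \<tau> d
  proof (intro continuous_on_diff)
    show "continuous_on {wu - \<tau>/2..wu + \<tau>/2} (\<lambda>w. h (w + d))"
    proof (rule continuous_on_compose2[OF hcont])
      show "continuous_on {wu - \<tau>/2..wu + \<tau>/2} (\<lambda>w. w + d)" by (intro continuous_intros)
      show "(\<lambda>w. w + d) ` {wu - \<tau>/2..wu + \<tau>/2} \<subseteq> I" using vI[OF V] by blast
    qed
    show "continuous_on {wu - \<tau>/2..wu + \<tau>/2} h"
      by (rule continuous_on_subset[OF hcont]) (use vI[OF V] in blast)
  qed
  have l1: "Fg 0 - Fg (-\<eta>) \<ge> c * \<eta> / 2" using lowneg[of "-\<eta>"] \<eta> by simp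
  have l2: "Fg \<eta> - Fg 0 \<ge> c * \<eta> / 2" using lowpos[of \<eta>] \<eta> by simp
  have Feta: "((\<lambda>w. h (w + \<eta>)) has_integral Fg \<eta>) {Sm..SM}" using \<eta> by (intro Fint) auto
  have Fmeta: "((\<lambda>w. h (w + - \<eta>)) has_integral Fg (-\<eta>)) {Sm..SM}" using \<eta> by (intro Fint) auto
  have etaI: "w + \<eta> \<in> I" "w + - \<eta> \<in> I" if "w \<in> {Sm..SM}" for w
    using that \<eta> rI by auto
  have rel: "Rr \<tau> d = \<delta> \<tau> d * q (\<delta> \<tau> d) \<and> \<bar>\<delta> \<tau> d\<bar> \<le> (2/c) * \<bar>Rr \<tau> d\<bar>"
    if V: "valid \<tau> d" and small: "\<bar>Rr \<tau> d\<bar> < c * \<eta> / 2" for \<tau> d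
  proof -
    define Su where "Su = {wu - \<tau>/2..wu + \<tau>/2}"
    from V have SuS: "Su \<subseteq> {Sm..SM}" unfolding valid_def Su_def by auto
    have SuI: "Su \<inter> {Sm..SM} = Su" using SuS by blast
    have gi: "(\<lambda>w. h (w + d) - h w) integrable_on Su"
      unfolding Su_def by (rule integrable_continuous_interval[OF gcont[OF V]])
    have hobs: "\<And>w. h (obs_score wu \<tau> d w) = h w + (if w \<in> Su then h (w + d) - h w else 0)"
      by (simp add: obs_score_def I_u_def Su_def)
    have ii: "(\<lambda>w. if w \<in> Su then h (w + d) - h w else 0) integrable_on {Sm..SM}"
      unfolding integrable_restrict_Int SuI by (rule gi)
    have hi: "h integrable_on {Sm..SM}"
      using continuous_on_subset[OF hcont assms(4)] by (simp add: integrable_continuous_interval)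
    have obsI: "(\<lambda>w. h (obs_score wu \<tau> d w)) integrable_on {Sm..SM}"
      unfolding hobs by (intro integrable_add hi ii)
    have F0: "((\<lambda>w. h (w + 0)) has_integral Fg 0) {Sm..SM}" using r by (intro Fint) auto
    have T: "integral {Sm..SM} (\<lambda>w. h (obs_score wu \<tau> d w)) = Fg 0 + Rr \<tau> d"
    proof -
      have "integral {Sm..SM} (\<lambda>w. h (obs_score wu \<tau> d w)) = integral {Sm..SM} h
           + integral {Sm..SM} (\<lambda>w. if w \<in> Su then h (w + d) - h w else 0)"
        unfolding hobs by (rule integral_add[OF hi ii])
      also have "integral {Sm..SM} h = Fg 0" using integral_unique[OF F0] by simp
      also have "integral {Sm..SM} (\<lambda>w. if w \<in> Su then h (w + d) - h w else 0) = Rr \<tau> d"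
        unfolding integral_restrict_Int SuI by (simp add: Rr_def Su_def)
      finally show ?thesis .
    qed
    have sm: "- (c * \<eta> / 2) < Rr \<tau> d" "Rr \<tau> d < c * \<eta> / 2" using small by (simp_all add: abs_less_iff)
    define y where "y = Fg 0 + Rr \<tau> d"
    have "Fg (-\<eta>) \<le> y" "y \<le> Fg \<eta>" "-\<eta> \<le> \<eta>" using l1 l2 sm \<eta> unfolding y_def by linarith+
    from IVT'[OF this Fgc] obtain e where e: "-\<eta> \<le> e" "e \<le> \<eta>" "Fg e = y" by blast
    have eI: "{Sm + e..SM + e} \<subseteq> I"
    proof -
      have "{Sm + e..SM + e} \<subseteq> {Sm - r..SM + r}" using e \<eta> by auto
      then show ?thesis using rI by blast
    qed
    have Fe: "((\<lambda>w. h (w + e)) has_integral Fg e) {Sm..SM}" using e \<eta> by (intro Fint) auto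
    have "optimal_offset I h Sm SM wu \<tau> d e"
      unfolding optimal_offset_def
    proof
      show "{Sm + e..SM + e} \<subseteq> I" by (rule eI)
      have "integral {Sm..SM} (\<lambda>w. h (w + e) - h (obs_score wu \<tau> d w)) = Fg e - (Fg 0 + Rr \<tau> d)"
        using integral_diff[OF has_integral_integrable[OF Fe] obsI] integral_unique[OF Fe] T by simp
      then show "integral {Sm..SM} (\<lambda>w. h (w + e) - h (obs_score wu \<tau> d w)) = 0"
        using e y_def by simp
    qed
    then have ex: "\<exists>e. optimal_offset I h Sm SM wu \<tau> d e" by blast
    have opt: "optimal_offset I h Sm SM wu \<tau> d (\<delta> \<tau> d)"
      using \<delta>_opt[of \<tau> d] V ex unfolding valid_def by blast
    define \<delta>' where "\<delta>' = \<delta> \<tau> d"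
    from opt have dI: "{Sm + \<delta>'..SM + \<delta>'} \<subseteq> I"
      and dint: "integral {Sm..SM} (\<lambda>w. h (w + \<delta>') - h (obs_score wu \<tau> d w)) = 0"
      unfolding optimal_offset_def \<delta>'_def by auto
    have dIi: "(\<lambda>w. h (w + \<delta>')) integrable_on {Sm..SM}"
      by (rule integrable_continuous_interval[OF shiftC[OF dI]])
    have Fd: "integral {Sm..SM} (\<lambda>w. h (w + \<delta>')) = Fg 0 + Rr \<tau> d"
      using integral_diff[OF dIi obsI] dint T by simp
    have dle: "\<bar>\<delta>'\<bar> \<le> \<eta>"
    proof (rule ccontr)
      assume "\<not> \<bar>\<delta>'\<bar> \<le> \<eta>"
      then consider "\<delta>' > \<eta>" | "\<delta>' < -\<eta>" by linarith
      then show False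
      proof cases
        case 1
        have "integral {Sm..SM} (\<lambda>w. h (w + \<eta>)) \<le> integral {Sm..SM} (\<lambda>w. h (w + \<delta>'))"
        proof (rule integral_le)
          show "(\<lambda>w. h (w + \<eta>)) integrable_on {Sm..SM}" using Feta by (rule has_integral_integrable)
          show "(\<lambda>w. h (w + \<delta>')) integrable_on {Sm..SM}" by (rule dIi)
          fix w assume w: "w \<in> {Sm..SM}"
          show "h (w + \<eta>) \<le> h (w + \<delta>')"
            by (rule mono_onD[OF assms(7) etaI(1)[OF w] shiftI[OF dI w]]) (use 1 in simp)
        qed
        moreover have "integral {Sm..SM} (\<lambda>w. h (w + \<eta>)) = Fg \<eta>" using integral_unique[OF Feta] .
        ultimately show False using Fd l2 sm by linarith
      next
        case 2
        have "integral {Sm..SM} (\<lambda>w. h (w + \<delta>')) \<le> integral {Sm..SM} (\<lambda>w. h (w + - \<eta>))"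
        proof (rule integral_le)
          show "(\<lambda>w. h (w + - \<eta>)) integrable_on {Sm..SM}" using Fmeta by (rule has_integral_integrable)
          show "(\<lambda>w. h (w + \<delta>')) integrable_on {Sm..SM}" by (rule dIi)
          fix w assume w: "w \<in> {Sm..SM}"
          show "h (w + \<delta>') \<le> h (w + - \<eta>)"
            by (rule mono_onD[OF assms(7) shiftI[OF dI w] etaI(2)[OF w]]) (use 2 in simp)
        qed
        moreover have "integral {Sm..SM} (\<lambda>w. h (w + - \<eta>)) = Fg (-\<eta>)" using integral_unique[OF Fmeta] .
        ultimately show False using Fd l1 sm by linarith
      qed
    qed
    have "((\<lambda>w. h (w + \<delta>')) has_integral Fg \<delta>') {Sm..SM}" using dle \<eta> by (intro Fint) auto
    then have Fd': "Fg \<delta>' - Fg 0 = Rr \<tau> d" using Fd by (simp add: integral_unique)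
    have dle2: "-\<eta> \<le> \<delta>'" "\<delta>' \<le> \<eta>" using dle by (simp_all add: abs_le_iff)
    have lb: "c/2 * \<bar>\<delta>'\<bar> \<le> \<bar>Rr \<tau> d\<bar>"
    proof (cases "\<delta>' \<ge> 0")
      case True
      have a: "\<bar>\<delta>'\<bar> = \<delta>'" using True by simp
      have "c/2 * \<delta>' \<le> Rr \<tau> d" using lowpos[OF True dle2(2)] Fd' by simp
      then show ?thesis unfolding a by (meson abs_ge_self order_trans)
    next
      case False
      then have F: "\<delta>' \<le> 0" by simp
      have a: "\<bar>\<delta>'\<bar> = - \<delta>'" using F by simp
      have "c/2 * (- \<delta>') \<le> - Rr \<tau> d" using lowneg[OF F dle2(1)] Fd' by simp
      then show ?thesis unfolding a by (meson abs_ge_minus_self order_trans)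
    qed
    show ?thesis
    proof
      show "Rr \<tau> d = \<delta> \<tau> d * q (\<delta> \<tau> d)"
        unfolding \<delta>'_def[symmetric] q_def using Fd' by (cases "\<delta>' = 0") simp_all
      show "\<bar>\<delta> \<tau> d\<bar> \<le> 2 / c * \<bar>Rr \<tau> d\<bar>"
        unfolding \<delta>'_def[symmetric] using lb c by (simp add: field_simps)
    qed
  qed
  have q0: "q 0 = c" by (simp add: q_def)
  have mpos: "c * \<eta> / 2 > 0" using c \<eta> by simp
  have part1: "((\<lambda>\<tau>. \<delta> \<tau> d / \<tau>) \<longlongrightarrow> (h (wu + d) - h wu) / (h SM - h Sm)) (at_right 0)"
    if dI: "wu + d \<in> I" for d
  proof -
    obtain \<rho>d where \<rho>d: "\<rho>d > 0" "ball (wu + d) \<rho>d \<subseteq> I"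
      using open_contains_ball_eq[OF assms(2)] dI by auto
    define \<rho>1 where "\<rho>1 = min \<rho>d (min (wu - Sm) (SM - wu))"
    have \<rho>1: "\<rho>1 > 0" using \<rho>d assms(10,11) \<rho>1_def by auto
    have validI: "valid \<tau> d" if "0 < \<tau>" "\<tau> < \<rho>1" for \<tau>
    proof -
      have "{wu - \<tau>/2 + d..wu + \<tau>/2 + d} \<subseteq> ball (wu + d) \<rho>d"
      proof
        fix x assume "x \<in> {wu - \<tau>/2 + d..wu + \<tau>/2 + d}"
        then have "\<bar>x - (wu + d)\<bar> < \<rho>d" using that \<rho>1_def by (auto simp: abs_less_iff)
        then show "x \<in> ball (wu + d) \<rho>d" by (rule inball)
      qed
      then show ?thesis unfolding valid_def using that \<rho>1_def \<rho>d by auto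
    qed
    define g where "g w = h (w + d) - h w" for w
    have A: "isCont (\<lambda>x. h (x + d)) wu"
      using isCont_o2[where f="\<lambda>x. x + d" and a=wu and g=h] hcat[OF dI] by (simp add: add.commute)
    have gcat: "isCont g wu" unfolding g_def using A hcat[OF wuI] by (rule isCont_diff)
    have ev1: "eventually (\<lambda>\<tau>. \<tau> \<in> {0<..<\<rho>1}) (at_right 0)" by (rule eventually_at_right_real[OF \<rho>1])
    have RL: "((\<lambda>\<tau>. Rr \<tau> d / \<tau>) \<longlongrightarrow> g wu) (at_right 0)"
    proof (rule tendstoI)
      fix \<epsilon> :: real assume \<epsilon>: "\<epsilon> > 0"
      have "\<forall>e>0. \<exists>d>0. \<forall>y. dist y wu < d \<longrightarrow> dist (g y) (g wu) < e"
        using gcat unfolding continuous_at_eps_delta .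
      from this[rule_format, of "\<epsilon>/2"] \<epsilon> obtain \<rho>2 where
        \<rho>2: "\<rho>2 > 0" "\<And>y. dist y wu < \<rho>2 \<Longrightarrow> dist (g y) (g wu) < \<epsilon>/2" by auto
      have "eventually (\<lambda>\<tau>. \<tau> \<in> {0<..<min \<rho>1 \<rho>2}) (at_right 0)"
        by (rule eventually_at_right_real) (use \<rho>1 \<rho>2 in simp)
      then show "eventually (\<lambda>\<tau>. dist (Rr \<tau> d / \<tau>) (g wu) < \<epsilon>) (at_right 0)"
      proof eventually_elim
        case (elim \<tau>)
        then have \<tau>: "0 < \<tau>" "\<tau> < \<rho>1" "\<tau> < \<rho>2" by auto
        have V: "valid \<tau> d" using validI \<tau> by auto
        have bnd: "\<bar>g w - g wu\<bar> \<le> \<epsilon>/2" if "w \<in> {wu - \<tau>/2..wu + \<tau>/2}" for w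
        proof -
          have "dist w wu < \<rho>2" using that \<tau> by (auto simp: dist_real_def abs_less_iff)
          from \<rho>2(2)[OF this] show ?thesis by (simp add: dist_real_def)
        qed
        have "\<bar>integral {wu - \<tau>/2..wu + \<tau>/2} g - (wu + \<tau>/2 - (wu - \<tau>/2)) * g wu\<bar>
              \<le> \<epsilon>/2 * (wu + \<tau>/2 - (wu - \<tau>/2))"
          using \<tau> gcont[OF V] bnd unfolding g_def by (intro int_approx) auto
        then have i: "\<bar>Rr \<tau> d - \<tau> * g wu\<bar> \<le> \<epsilon>/2 * \<tau>" unfolding Rr_def g_def by simp
        have "Rr \<tau> d / \<tau> - g wu = (Rr \<tau> d - \<tau> * g wu) / \<tau>" using \<tau> by (simp add: field_simps)
        then have "\<bar>Rr \<tau> d / \<tau> - g wu\<bar> = \<bar>Rr \<tau> d - \<tau> * g wu\<bar> / \<tau>" using \<tau> by simp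
        also have "\<dots> \<le> \<epsilon>/2" using i \<tau> by (simp add: divide_le_eq)
        finally show ?case using \<epsilon> by (simp add: dist_real_def)
      qed
    qed
    have "((\<lambda>\<tau>. \<delta> \<tau> d / \<tau>) \<longlongrightarrow> g wu / q 0) (at_right 0)"
    proof (rule generic[where P="\<lambda>\<tau>. valid \<tau> d" and R="\<lambda>\<tau>. Rr \<tau> d" and m="c*\<eta>/2" and K="2/c"
          and D="\<lambda>\<tau>. \<delta> \<tau> d" and s="\<lambda>\<tau>. \<tau>"])
      show "eventually (\<lambda>\<tau>. valid \<tau> d) (at_right 0)" using ev1 by eventually_elim (auto intro: validI)
      show "\<And>\<tau>. valid \<tau> d \<Longrightarrow> \<bar>Rr \<tau> d\<bar> < c*\<eta>/2 \<Longrightarrow>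
          Rr \<tau> d = \<delta> \<tau> d * q (\<delta> \<tau> d) \<and> \<bar>\<delta> \<tau> d\<bar> \<le> 2/c * \<bar>Rr \<tau> d\<bar>" by (rule rel)
      show "c*\<eta>/2 > 0" by (rule mpos)
      show "((\<lambda>\<tau>. Rr \<tau> d / \<tau>) \<longlongrightarrow> g wu) (at_right 0)" by (rule RL)
      show "((\<lambda>\<tau>. \<tau>) \<longlongrightarrow> 0) (at_right (0::real))" by (rule tendsto_ident_at)
      show "eventually (\<lambda>\<tau>. \<tau> \<noteq> 0) (at_right (0::real))" using ev1 by eventually_elim auto
      show "isCont q 0" by (rule qc)
      show "q 0 \<noteq> 0" using q0 c by simp
    qed
    then show ?thesis unfolding g_def q0 c_def .
  qed
  let ?F = "at (0::real, 0::real) within {p. fst p > 0 \<and> snd p \<noteq> 0}"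
  have part2: "((\<lambda>p. \<delta> (fst p) (snd p) / (snd p * fst p)) \<longlongrightarrow> h' wu / (h SM - h Sm)) ?F"
  proof -
    define \<rho>1 where "\<rho>1 = min \<rho>0 (min (wu - Sm) (SM - wu))"
    have \<rho>1: "\<rho>1 > 0" using \<rho>0 assms(10,11) \<rho>1_def by auto
    have fs: "\<bar>fst p\<bar> \<le> dist p (0,0)" "\<bar>snd p\<bar> \<le> dist p (0,0)" for p :: "real \<times> real"
      using dist_fst_le[of p "(0,0)"] dist_snd_le[of p "(0,0)"] by (simp_all add: dist_real_def)
    have inb: "x \<in> I" if "\<bar>x - wu\<bar> < \<rho>1" for x
      using that \<rho>1_def by (intro subsetD[OF \<rho>0(2)] inball) auto
    have validI: "valid (fst p) (snd p)" if "fst p > 0" "dist p (0,0) < \<rho>1/2" for p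
    proof -
      have "{wu - fst p/2 + snd p..wu + fst p/2 + snd p} \<subseteq> I"
      proof
        fix x assume "x \<in> {wu - fst p/2 + snd p..wu + fst p/2 + snd p}"
        then have "\<bar>x - wu\<bar> < \<rho>1" using that fs[of p] by (auto simp: abs_less_iff abs_le_iff)
        then show "x \<in> I" by (rule inb)
      qed
      then show ?thesis unfolding valid_def using that fs[of p] \<rho>1_def by auto
    qed
    have evS: "eventually (\<lambda>p. fst p > 0 \<and> snd p \<noteq> 0 \<and> dist p (0,0) < r') ?F" if "r' > 0" for r'
      unfolding eventually_at using that by (intro exI[of _ r']) auto
    have hc': "isCont h' wu" using assms(6) assms(2) wuI continuous_on_eq_continuous_at by blast
    have RL: "((\<lambda>p. Rr (fst p) (snd p) / (snd p * fst p)) \<longlongrightarrow> h' wu) ?F"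
    proof (rule tendstoI)
      fix \<epsilon> :: real assume \<epsilon>: "\<epsilon> > 0"
      have "\<forall>e>0. \<exists>d>0. \<forall>y. dist y wu < d \<longrightarrow> dist (h' y) (h' wu) < e"
        using hc' unfolding continuous_at_eps_delta .
      from this[rule_format, of "\<epsilon>/2"] \<epsilon> obtain \<rho>2 where
        \<rho>2: "\<rho>2 > 0" "\<And>y. dist y wu < \<rho>2 \<Longrightarrow> dist (h' y) (h' wu) < \<epsilon>/2" by auto
      have "min \<rho>1 \<rho>2 / 2 > 0" using \<rho>1 \<rho>2 by simp
      from evS[OF this]
      show "eventually (\<lambda>p. dist (Rr (fst p) (snd p) / (snd p * fst p)) (h' wu) < \<epsilon>) ?F"
      proof eventually_elim
        case (elim p)
        define \<tau> where "\<tau> = fst p"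
        define d where "d = snd p"
        have \<tau>: "\<tau> > 0" "d \<noteq> 0" "\<tau> < min \<rho>1 \<rho>2 / 2" "\<bar>d\<bar> < min \<rho>1 \<rho>2 / 2"
          using elim fs[of p] unfolding \<tau>_def d_def by auto
        have V: "valid \<tau> d" unfolding \<tau>_def d_def using elim by (intro validI) auto
        have bnd: "\<bar>(h (w + d) - h w) - d * h' wu\<bar> \<le> \<bar>d\<bar> * (\<epsilon>/2)"
          if w: "w \<in> {wu - \<tau>/2..wu + \<tau>/2}" for w
        proof -
          have "\<bar>w - wu\<bar> < \<rho>1" "\<bar>w + d - wu\<bar> < \<rho>1" using w \<tau> by (auto simp: abs_less_iff)
          then have "w \<in> I" "w + d \<in> I" by (auto intro: inb)
          from mvt_h[OF hd assms(3) this] obtain \<xi> where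
            \<xi>: "\<bar>\<xi> - w\<bar> \<le> \<bar>w + d - w\<bar>" "h (w + d) - h w = (w + d - w) * h' \<xi>" by blast
          have "\<bar>\<xi> - wu\<bar> < \<rho>2" using \<xi>(1) w \<tau> by (auto simp: abs_less_iff abs_le_iff)
          then have "\<bar>h' \<xi> - h' wu\<bar> \<le> \<epsilon>/2" using \<rho>2(2)[of \<xi>] by (simp add: dist_real_def)
          then have m: "\<bar>d\<bar> * \<bar>h' \<xi> - h' wu\<bar> \<le> \<bar>d\<bar> * (\<epsilon>/2)" by (rule mult_left_mono) simp
          have eq: "(h (w + d) - h w) - d * h' wu = d * (h' \<xi> - h' wu)"
            using \<xi>(2) by (simp add: algebra_simps)
          show ?thesis unfolding eq abs_mult using m .
        qed
        have "\<bar>integral {wu - \<tau>/2..wu + \<tau>/2} (\<lambda>w. h (w + d) - h w) - (wu + \<tau>/2 - (wu - \<tau>/2)) * (d * h' wu)\<bar>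
              \<le> \<bar>d\<bar> * (\<epsilon>/2) * (wu + \<tau>/2 - (wu - \<tau>/2))"
          using \<tau> gcont[OF V] bnd by (intro int_approx) auto
        then have i: "\<bar>Rr \<tau> d - \<tau> * (d * h' wu)\<bar> \<le> \<bar>d\<bar> * (\<epsilon>/2) * \<tau>" unfolding Rr_def by simp
        have "Rr \<tau> d / (d * \<tau>) - h' wu = (Rr \<tau> d - \<tau> * (d * h' wu)) / (d * \<tau>)" using \<tau> by (simp add: field_simps)
        then have "\<bar>Rr \<tau> d / (d * \<tau>) - h' wu\<bar> = \<bar>Rr \<tau> d - \<tau> * (d * h' wu)\<bar> / (\<bar>d\<bar> * \<tau>)"
          using \<tau> by (simp add: abs_mult)
        also have "\<dots> \<le> \<epsilon>/2" using i \<tau> by (simp add: divide_le_eq mult.commute mult.left_commute)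
        finally show ?case using \<epsilon> unfolding \<tau>_def d_def by (simp add: dist_real_def)
      qed
    qed
    have "((\<lambda>p::real\<times>real. p) \<longlongrightarrow> (0, 0)) ?F" by (rule tendsto_ident_at)
    from tendsto_mult[OF tendsto_snd[OF this] tendsto_fst[OF this]]
    have s0: "((\<lambda>p. snd p * fst p) \<longlongrightarrow> 0) ?F" by simp
    have "((\<lambda>p. \<delta> (fst p) (snd p) / (snd p * fst p)) \<longlongrightarrow> h' wu / q 0) ?F"
    proof (rule generic[where P="\<lambda>p. valid (fst p) (snd p)" and R="\<lambda>p. Rr (fst p) (snd p)" and m="c*\<eta>/2"
          and K="2/c" and D="\<lambda>p. \<delta> (fst p) (snd p)" and s="\<lambda>p. snd p * fst p"])
      have "\<rho>1/2 > 0" using \<rho>1 by simp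
      from evS[OF this] show "eventually (\<lambda>p. valid (fst p) (snd p)) ?F"
        by eventually_elim (auto intro: validI)
      show "\<And>p. valid (fst p) (snd p) \<Longrightarrow> \<bar>Rr (fst p) (snd p)\<bar> < c*\<eta>/2 \<Longrightarrow>
          Rr (fst p) (snd p) = \<delta> (fst p) (snd p) * q (\<delta> (fst p) (snd p)) \<and>
          \<bar>\<delta> (fst p) (snd p)\<bar> \<le> 2/c * \<bar>Rr (fst p) (snd p)\<bar>" by (rule rel)
      show "c*\<eta>/2 > 0" by (rule mpos)
      show "((\<lambda>p. Rr (fst p) (snd p) / (snd p * fst p)) \<longlongrightarrow> h' wu) ?F" by (rule RL)
      show "((\<lambda>p. snd p * fst p) \<longlongrightarrow> 0) ?F" by (rule s0)
      from evS[OF zero_less_one] show "eventually (\<lambda>p. snd p * fst p \<noteq> 0) ?F"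
        by eventually_elim auto
      show "isCont q 0" by (rule qc)
      show "q 0 \<noteq> 0" using q0 c by simp
    qed
    then show ?thesis unfolding q0 c_def .
  qed
  show ?thesis using part1 part2 by blast
qed

end
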